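(* In a pre-Hilbert $*$-category: (i) every isometry is contractive; (ii) if $f\colon X\to Y$ and $g\colon Y\to Z$ are contractive, then $gf$ is contractive; (iii) if $f$ is contractive, then $f^*$ is contractive.
   Context: A $*$-category is a category with a choice of $f^*\colon Y\to X$ for each $f\colon X\to Y$ such that $1^*=1$, $(gf)^*=f^*g^*$, $(f^* )^*=f$; $f$ is an isometry if $f^*f=1$. A pre-Hilbert $*$-category is a $*$-category with (R1) a zero object, (R2) orthonormal biproducts of all pairs of objects (biproducts $(X,s_1,r_1,s_2,r_2)$ with $r_k=s_k^*$), (R3) an isometric kernel for every morphism, and (R4) every diagonal $\Delta\colon X\to X\oplus X$ a kernel of some morphism. Such a category is additive. For Hermitian endomorphisms $a,b\colon A\to A$ (i.e. $a^*=a$, $b^*=b$), $a\leq b$ means $b-a=y^*y$ for some object $Y$ and some $y\colon A\to Y$. A morphism $f$ is contractive (a contraction) if $f^*f\leq 1$. *)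

theory Defs
  imports Main
begin

text \<open>A category with a choice of adjoints. Objects form the type 'o, morphisms the
type 'm. scomp C g f is the composite g after f (defined when sdom g = scod f).\<close>

record ('o, 'm) scat =
  sdom  :: "'m \<Rightarrow> 'o"
  scod  :: "'m \<Rightarrow> 'o"
  sid   :: "'o \<Rightarrow> 'm"
  scomp :: "'m \<Rightarrow> 'm \<Rightarrow> 'm"
  sstar :: "'m \<Rightarrow> 'm"

definition hom :: "('o, 'm) scat \<Rightarrow> 'm \<Rightarrow> 'o \<Rightarrow> 'o \<Rightarrow> bool" where
  "hom C f X Y \<longleftrightarrow> sdom C f = X \<and> scod C f = Y"

definition star_category :: "('o, 'm) scat \<Rightarrow> bool" where
  "star_category C \<longleftrightarrow>
     (\<forall>X. sdom C (sid C X) = X \<and> scod C (sid C X) = X) \<and>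
     (\<forall>f g. sdom C g = scod C f \<longrightarrow>
        sdom C (scomp C g f) = sdom C f \<and> scod C (scomp C g f) = scod C g) \<and>
     (\<forall>f. scomp C (sid C (scod C f)) f = f \<and> scomp C f (sid C (sdom C f)) = f) \<and>
     (\<forall>f g h. sdom C h = scod C g \<and> sdom C g = scod C f \<longrightarrow>
        scomp C (scomp C h g) f = scomp C h (scomp C g f)) \<and>
     (\<forall>f. sdom C (sstar C f) = scod C f \<and> scod C (sstar C f) = sdom C f) \<and>
     (\<forall>X. sstar C (sid C X) = sid C X) \<and>
     (\<forall>f g. sdom C g = scod C f \<longrightarrow>
        sstar C (scomp C g f) = scomp C (sstar C f) (sstar C g)) \<and>
     (\<forall>f. sstar C (sstar C f) = f)"

definition zero_obj :: "('o, 'm) scat \<Rightarrow> 'o \<Rightarrow> bool" where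
  "zero_obj C Z \<longleftrightarrow> (\<forall>X. (\<exists>!f. hom C f X Z) \<and> (\<exists>!f. hom C f Z X))"

definition zero_mor :: "('o, 'm) scat \<Rightarrow> 'm \<Rightarrow> bool" where
  "zero_mor C f \<longleftrightarrow> (\<exists>Z g h. zero_obj C Z \<and> hom C g (sdom C f) Z \<and>
      hom C h Z (scod C f) \<and> f = scomp C h g)"

definition biproduct ::
  "('o, 'm) scat \<Rightarrow> 'o \<Rightarrow> 'o \<Rightarrow> 'o \<Rightarrow> 'm \<Rightarrow> 'm \<Rightarrow> 'm \<Rightarrow> 'm \<Rightarrow> bool" where
  "biproduct C X1 X2 P s1 r1 s2 r2 \<longleftrightarrow>
     hom C s1 X1 P \<and> hom C r1 P X1 \<and> hom C s2 X2 P \<and> hom C r2 P X2 \<and>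
     scomp C r1 s1 = sid C X1 \<and> scomp C r2 s2 = sid C X2 \<and>
     zero_mor C (scomp C r1 s2) \<and> zero_mor C (scomp C r2 s1) \<and>
     (\<forall>A f g. hom C f A X1 \<and> hom C g A X2 \<longrightarrow>
        (\<exists>!h. hom C h A P \<and> scomp C r1 h = f \<and> scomp C r2 h = g)) \<and>
     (\<forall>A f g. hom C f X1 A \<and> hom C g X2 A \<longrightarrow>
        (\<exists>!h. hom C h P A \<and> scomp C h s1 = f \<and> scomp C h s2 = g))"

definition orthonormal_biproduct ::
  "('o, 'm) scat \<Rightarrow> 'o \<Rightarrow> 'o \<Rightarrow> 'o \<Rightarrow> 'm \<Rightarrow> 'm \<Rightarrow> 'm \<Rightarrow> 'm \<Rightarrow> bool" where
  "orthonormal_biproduct C X1 X2 P s1 r1 s2 r2 \<longleftrightarrow>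
     biproduct C X1 X2 P s1 r1 s2 r2 \<and> r1 = sstar C s1 \<and> r2 = sstar C s2"

definition is_kernel :: "('o, 'm) scat \<Rightarrow> 'm \<Rightarrow> 'm \<Rightarrow> bool" where
  "is_kernel C k f \<longleftrightarrow> scod C k = sdom C f \<and> zero_mor C (scomp C f k) \<and>
     (\<forall>g. scod C g = sdom C f \<and> zero_mor C (scomp C f g) \<longrightarrow>
        (\<exists>!h. hom C h (sdom C g) (sdom C k) \<and> scomp C k h = g))"

definition isometry :: "('o, 'm) scat \<Rightarrow> 'm \<Rightarrow> bool" where
  "isometry C f \<longleftrightarrow> scomp C (sstar C f) f = sid C (sdom C f)"

definition pre_hilbert :: "('o, 'm) scat \<Rightarrow> bool" where
  "pre_hilbert C \<longleftrightarrow> star_category C \<and>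
     (\<exists>Z. zero_obj C Z) \<and>
     (\<forall>X1 X2. \<exists>P s1 r1 s2 r2. orthonormal_biproduct C X1 X2 P s1 r1 s2 r2) \<and>
     (\<forall>f. \<exists>k. is_kernel C k f \<and> isometry C k) \<and>
     (\<forall>X P s1 r1 s2 r2 d. orthonormal_biproduct C X X P s1 r1 s2 r2 \<and> hom C d X P \<and>
        scomp C r1 d = sid C X \<and> scomp C r2 d = sid C X \<longrightarrow> (\<exists>g. is_kernel C d g))"

text \<open>Addition of parallel morphisms induced by biproducts:
  f + g = nabla after (f,g), where (f,g) : A -> B+B and nabla : B+B -> B is the codiagonal.\<close>
definition is_sum :: "('o, 'm) scat \<Rightarrow> 'm \<Rightarrow> 'm \<Rightarrow> 'm \<Rightarrow> bool" where
  "is_sum C f g h \<longleftrightarrow> (\<exists>A B P s1 r1 s2 r2 u v.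
     hom C f A B \<and> hom C g A B \<and> biproduct C B B P s1 r1 s2 r2 \<and>
     hom C u A P \<and> scomp C r1 u = f \<and> scomp C r2 u = g \<and>
     hom C v P B \<and> scomp C v s1 = sid C B \<and> scomp C v s2 = sid C B \<and>
     h = scomp C v u)"

definition madd :: "('o, 'm) scat \<Rightarrow> 'm \<Rightarrow> 'm \<Rightarrow> 'm" where
  "madd C f g = (THE h. is_sum C f g h)"

definition hermitian :: "('o, 'm) scat \<Rightarrow> 'm \<Rightarrow> bool" where
  "hermitian C a \<longleftrightarrow> sdom C a = scod C a \<and> sstar C a = a"

text \<open>a \<le> b for Hermitian endomorphisms of A: b - a = y* y for some y : A -> Y,
  i.e. (in the additive category) b = a + y* y.\<close>
definition mle :: "('o, 'm) scat \<Rightarrow> 'm \<Rightarrow> 'm \<Rightarrow> bool" where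
  "mle C a b \<longleftrightarrow> hermitian C a \<and> hermitian C b \<and> sdom C a = sdom C b \<and>
     (\<exists>y. sdom C y = sdom C a \<and> b = madd C a (scomp C (sstar C y) y))"

definition contractive :: "('o, 'm) scat \<Rightarrow> 'm \<Rightarrow> bool" where
  "contractive C f \<longleftrightarrow> mle C (scomp C (sstar C f) f) (sid C (sdom C f))"

end

theory Submission
  imports Defs
begin

locale ph =
  fixes C :: "('o, 'm) scat"
  assumes PH: "pre_hilbert C"
begin

abbreviation cp (infixr "\<odot>" 70) where "g \<odot> f \<equiv> scomp C g f"
abbreviation st where "st f \<equiv> sstar C f"
abbreviation I where "I X \<equiv> sid C X"
abbreviation pl (infixl "\<boxplus>" 65) where "f \<boxplus> g \<equiv> madd C f g"
abbreviation hm where "hm f A B \<equiv> hom C f A B"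

lemma SC: "star_category C" using PH by (simp add: pre_hilbert_def)

lemma SC1: "sdom C (I X) = X \<and> scod C (I X) = X" using SC[unfolded star_category_def] by (elim conjE) simp
lemma SC2: "sdom C g = scod C f \<Longrightarrow> sdom C (scomp C g f) = sdom C f \<and> scod C (scomp C g f) = scod C g"
  using SC[unfolded star_category_def] by (elim conjE) simp
lemma SC3: "scomp C (I (scod C f)) f = f \<and> scomp C f (I (sdom C f)) = f"
  using SC[unfolded star_category_def] by (elim conjE) simp
lemma SC4: "sdom C h = scod C g \<Longrightarrow> sdom C g = scod C f \<Longrightarrow>
        scomp C (scomp C h g) f = scomp C h (scomp C g f)"
  using SC[unfolded star_category_def] by (elim conjE) simp
lemma SC5: "sdom C (sstar C f) = scod C f \<and> scod C (sstar C f) = sdom C f"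
  using SC[unfolded star_category_def] by (elim conjE) simp
lemma SC6: "sstar C (I X) = I X"
  using SC[unfolded star_category_def] by (elim conjE) simp
lemma SC7: "sdom C g = scod C f \<Longrightarrow> sstar C (scomp C g f) = scomp C (sstar C f) (sstar C g)"
  using SC[unfolded star_category_def] by (elim conjE) simp
lemma SC8: "sstar C (sstar C f) = f"
  using SC[unfolded star_category_def] by (elim conjE) simp

lemma hom_self: "hm f (sdom C f) (scod C f)" by (simp add: hom_def)
lemma id_hom[intro,simp]: "hm (I X) X X" using SC1 by (simp add: hom_def)
lemma comp_hom[intro]: "hm f A B \<Longrightarrow> hm g B D \<Longrightarrow> hm (g \<odot> f) A D"
  using SC2 by (simp add: hom_def)
lemma id_l[simp]: "hm f A B \<Longrightarrow> I B \<odot> f = f"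
  using SC3 by (auto simp add: hom_def)
lemma id_r[simp]: "hm f A B \<Longrightarrow> f \<odot> I A = f"
  using SC3 by (auto simp add: hom_def)
lemma assoc: "hm f A B \<Longrightarrow> hm g B D \<Longrightarrow> hm h D E \<Longrightarrow> (h \<odot> g) \<odot> f = h \<odot> (g \<odot> f)"
  using SC4 by (simp add: hom_def)
lemma star_hom[intro]: "hm f A B \<Longrightarrow> hm (st f) B A"
  using SC5 by (simp add: hom_def)
lemma star_id[simp]: "st (I X) = I X"
  using SC6 by simp
lemma star_comp: "hm f A B \<Longrightarrow> hm g B D \<Longrightarrow> st (g \<odot> f) = st f \<odot> st g"
  using SC7 by (simp add: hom_def)
lemma star_star[simp]: "st (st f) = f"
  using SC8 by simp
lemma hom_uniq: "hm f A B \<Longrightarrow> hm f A' B' \<Longrightarrow> A' = A \<and> B' = B"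
  by (simp add: hom_def)

definition Z0 where "Z0 = (SOME Z. zero_obj C Z)"
lemma Z0: "zero_obj C Z0"
proof -
  have "\<exists>Z. zero_obj C Z" using PH unfolding pre_hilbert_def by (elim conjE)
  thus ?thesis unfolding Z0_def by (rule someI_ex)
qed
lemma to_zero: assumes "zero_obj C Z" "hm a X Z" "hm b X Z" shows "a = b"
proof -
  have "\<exists>!f. hm f X Z" using assms(1) unfolding zero_obj_def by simp
  thus ?thesis using assms(2,3) by (elim ex1E) blast
qed
lemma from_zero: assumes "zero_obj C Z" "hm a Z X" "hm b Z X" shows "a = b"
proof -
  have "\<exists>!f. hm f Z X" using assms(1) unfolding zero_obj_def by simp
  thus ?thesis using assms(2,3) by (elim ex1E) blast
qed
lemma to_zero_ex: "zero_obj C Z \<Longrightarrow> \<exists>a. hm a X Z"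
  unfolding zero_obj_def by (elim allE conjE ex1E) (rule exI)
lemma from_zero_ex: "zero_obj C Z \<Longrightarrow> \<exists>a. hm a Z X"
  unfolding zero_obj_def by (elim allE conjE ex1E) (rule exI)

definition zin where "zin X = (THE a. hm a X Z0)"
definition zout where "zout Y = (THE a. hm a Z0 Y)"
lemma ex1_to: "\<exists>!a. hm a X Z0" using Z0 unfolding zero_obj_def by simp
lemma ex1_from: "\<exists>!a. hm a Z0 X" using Z0 unfolding zero_obj_def by simp
lemma zin: "hm (zin X) X Z0"
  unfolding zin_def by (rule theI'[OF ex1_to])
lemma zout: "hm (zout X) Z0 X"
  unfolding zout_def by (rule theI'[OF ex1_from])
lemma zin_eq: "hm a X Z0 \<Longrightarrow> a = zin X"
  unfolding zin_def by (rule the1_equality[OF ex1_to, symmetric])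
lemma zout_eq: "hm a Z0 X \<Longrightarrow> a = zout X"
  unfolding zout_def by (rule the1_equality[OF ex1_from, symmetric])

definition zm where "zm X Y = zout Y \<odot> zin X"
lemma zm_hom[intro,simp]: "hm (zm X Y) X Y" unfolding zm_def by (rule comp_hom[OF zin zout])

lemma zero_mor_eq: assumes "zero_mor C f" "hm f X Y" shows "f = zm X Y"
proof -
  obtain Z g h where Z: "zero_obj C Z" "hm g (sdom C f) Z" "hm h Z (scod C f)" "f = h \<odot> g"
    using assms(1) unfolding zero_mor_def by blast
  have Z': "hm g X Z" "hm h Z Y" using Z assms(2) by (auto simp: hom_def)
  obtain \<phi> where ph: "hm \<phi> Z0 Z" using Z(1) from_zero_ex by blast
  obtain \<psi> where ps: "hm \<psi> Z Z0" using Z0 from_zero_ex by blast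
  have e: "\<phi> \<odot> \<psi> = I Z" using Z(1) ph ps from_zero by blast
  have "f = h \<odot> g" by (rule Z(4))
  also have "\<dots> = h \<odot> ((\<phi> \<odot> \<psi>) \<odot> g)" using Z' e by simp
  also have "\<dots> = h \<odot> (\<phi> \<odot> (\<psi> \<odot> g))" using Z' ph ps by (simp add: assoc)
  also have "\<dots> = (h \<odot> \<phi>) \<odot> (\<psi> \<odot> g)"
    by (rule assoc[OF comp_hom[OF Z'(1) ps] ph Z'(2), symmetric])
  also have "\<dots> = zm X Y" unfolding zm_def
  proof -
    have "h \<odot> \<phi> = zout Y" using Z' ph by (intro zout_eq comp_hom)
    moreover have "\<psi> \<odot> g = zin X" using Z' ps by (intro zin_eq comp_hom)
    ultimately show "(h \<odot> \<phi>) \<odot> (\<psi> \<odot> g) = zout Y \<odot> zin X" by simp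
  qed
  finally show ?thesis .
qed

lemma zm_is_zero: "zero_mor C (zm X Y)"
proof -
  have "sdom C (zm X Y) = X" "scod C (zm X Y) = Y" using zm_hom[of X Y] unfolding hom_def by auto
  thus ?thesis unfolding zero_mor_def
    by (intro exI[of _ Z0] exI[of _ "zin X"] exI[of _ "zout Y"]) (simp add: Z0 zin zout zm_def)
qed

lemma zero_mor_iff: "hm f X Y \<Longrightarrow> zero_mor C f \<longleftrightarrow> f = zm X Y"
  using zero_mor_eq[of f X Y] zm_is_zero[of X Y] by auto

lemma zm_comp_l[simp]: assumes "hm f A X" shows "zm X Y \<odot> f = zm A Y"
proof -
  have "zm X Y \<odot> f = zout Y \<odot> (zin X \<odot> f)" unfolding zm_def by (rule assoc[OF assms zin zout])
  also have "zin X \<odot> f = zin A" using assms zin by (intro zin_eq comp_hom)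
  finally show ?thesis unfolding zm_def .
qed
lemma zm_comp_r[simp]: assumes "hm f Y B" shows "f \<odot> zm X Y = zm X B"
proof -
  have "f \<odot> zm X Y = (f \<odot> zout Y) \<odot> zin X" unfolding zm_def by (rule assoc[OF zin zout assms, symmetric])
  also have "f \<odot> zout Y = zout B" using assms zout by (intro zout_eq comp_hom)
  finally show ?thesis unfolding zm_def .
qed
lemma zm_star[simp]: "st (zm X Y) = zm Y X"
proof -
  have "st (zm X Y) = st (zin X) \<odot> st (zout Y)" unfolding zm_def by (rule star_comp[OF zin zout])
  also have "st (zin X) = zout X" using zin by (intro zout_eq star_hom)
  also have "st (zout Y) = zin Y" using zout by (intro zin_eq star_hom)
  finally show ?thesis unfolding zm_def .
qed

lemma ex1_uniq: "\<exists>!x. P x \<Longrightarrow> P a \<Longrightarrow> P b \<Longrightarrow> a = b" by blast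

context
  fixes X1 X2 P s1 r1 s2 r2
  assumes BP: "biproduct C X1 X2 P s1 r1 s2 r2"
begin
lemma bp_s1: "hm s1 X1 P" using BP unfolding biproduct_def by (elim conjE)
lemma bp_r1: "hm r1 P X1" using BP unfolding biproduct_def by (elim conjE)
lemma bp_s2: "hm s2 X2 P" using BP unfolding biproduct_def by (elim conjE)
lemma bp_r2: "hm r2 P X2" using BP unfolding biproduct_def by (elim conjE)
lemma bp_11: "r1 \<odot> s1 = I X1" using BP unfolding biproduct_def by (elim conjE)
lemma bp_22: "r2 \<odot> s2 = I X2" using BP unfolding biproduct_def by (elim conjE)
lemma bp_12: "r1 \<odot> s2 = zm X2 X1"
proof -
  have "zero_mor C (r1 \<odot> s2)" using BP unfolding biproduct_def by (elim conjE)
  thus ?thesis using zero_mor_eq comp_hom[OF bp_s2 bp_r1] by blast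
qed
lemma bp_21: "r2 \<odot> s1 = zm X1 X2"
proof -
  have "zero_mor C (r2 \<odot> s1)" using BP unfolding biproduct_def by (elim conjE)
  thus ?thesis using zero_mor_eq comp_hom[OF bp_s1 bp_r2] by blast
qed
lemma bp_U1: "\<forall>A f g. hom C f A X1 \<and> hom C g A X2 \<longrightarrow>
        (\<exists>!h. hom C h A P \<and> scomp C r1 h = f \<and> scomp C r2 h = g)"
  using BP unfolding biproduct_def by (elim conjE)
lemma bp_U2: "\<forall>A f g. hom C f X1 A \<and> hom C g X2 A \<longrightarrow>
        (\<exists>!h. hom C h P A \<and> scomp C h s1 = f \<and> scomp C h s2 = g)"
  using BP unfolding biproduct_def by (elim conjE)

lemma prod_ex: assumes "hm f A X1" "hm g A X2"
  obtains h where "hm h A P" "r1 \<odot> h = f" "r2 \<odot> h = g"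
  using bp_U1 assms by blast
lemma coprod_ex: assumes "hm f X1 A" "hm g X2 A"
  obtains h where "hm h P A" "h \<odot> s1 = f" "h \<odot> s2 = g"
  using bp_U2 assms by blast
lemma prod_uniq: assumes "hm h A P" "hm h' A P" "r1 \<odot> h = r1 \<odot> h'" "r2 \<odot> h = r2 \<odot> h'"
  shows "h = h'"
proof -
  have "\<exists>!x. hm x A P \<and> r1 \<odot> x = r1 \<odot> h \<and> r2 \<odot> x = r2 \<odot> h"
    using bp_U1 comp_hom[OF assms(1) bp_r1] comp_hom[OF assms(1) bp_r2] by blast
  thus ?thesis using assms by (elim ex1_uniq) auto
qed
lemma coprod_uniq: assumes "hm h P A" "hm h' P A" "h \<odot> s1 = h' \<odot> s1" "h \<odot> s2 = h' \<odot> s2"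
  shows "h = h'"
proof -
  have "\<exists>!x. hm x P A \<and> x \<odot> s1 = h \<odot> s1 \<and> x \<odot> s2 = h \<odot> s2"
    using bp_U2 comp_hom[OF bp_s1 assms(1)] comp_hom[OF bp_s2 assms(1)] by blast
  thus ?thesis using assms by (elim ex1_uniq) auto
qed
lemma bp_swap: "biproduct C X2 X1 P s2 r2 s1 r1"
  unfolding biproduct_def
proof (intro conjI allI impI)
  fix A f g assume a: "hom C f A X2 \<and> hom C g A X1"
  have "\<exists>!h. hom C h A P \<and> r1 \<odot> h = g \<and> r2 \<odot> h = f" using bp_U1 a by blast
  thus "\<exists>!h. hom C h A P \<and> r2 \<odot> h = f \<and> r1 \<odot> h = g" by (simp add: conj_ac)
next
  fix A f g assume a: "hom C f X2 A \<and> hom C g X1 A"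
  have "\<exists>!h. hom C h P A \<and> h \<odot> s1 = g \<and> h \<odot> s2 = f" using bp_U2 a by blast
  thus "\<exists>!h. hom C h P A \<and> h \<odot> s2 = f \<and> h \<odot> s1 = g" by (simp add: conj_ac)
qed (use bp_s1 bp_s2 bp_r1 bp_r2 bp_11 bp_22 bp_12 bp_21 zm_is_zero in auto)
end

lemma obp_ex: "\<exists>P s1 r1 s2 r2. orthonormal_biproduct C X1 X2 P s1 r1 s2 r2"
  using PH unfolding pre_hilbert_def by (elim conjE) blast
lemma obp_bp: "orthonormal_biproduct C X1 X2 P s1 r1 s2 r2 \<Longrightarrow> biproduct C X1 X2 P s1 r1 s2 r2"
  unfolding orthonormal_biproduct_def by (elim conjE)
lemma obp_r1: "orthonormal_biproduct C X1 X2 P s1 r1 s2 r2 \<Longrightarrow> r1 = st s1"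
  unfolding orthonormal_biproduct_def by simp
lemma obp_r2: "orthonormal_biproduct C X1 X2 P s1 r1 s2 r2 \<Longrightarrow> r2 = st s2"
  unfolding orthonormal_biproduct_def by simp
lemma bp_ex: obtains P s1 r1 s2 r2 where "biproduct C X1 X2 P s1 r1 s2 r2"
  using obp_ex obp_bp by blast

lemma dom_comp: "sdom C g = scod C f \<Longrightarrow> sdom C (g \<odot> f) = sdom C f" using SC2 by blast
lemma cod_comp: "sdom C g = scod C f \<Longrightarrow> scod C (g \<odot> f) = scod C g" using SC2 by blast
lemma dom_star: "sdom C (st f) = scod C f" using SC5 by blast
lemma cod_star: "scod C (st f) = sdom C f" using SC5 by blast
lemma dom_id: "sdom C (I X) = X" using SC1 by blast
lemma cod_id: "scod C (I X) = X" using SC1 by blast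
lemma assoc': "sdom C h = scod C g \<Longrightarrow> sdom C g = scod C f \<Longrightarrow> (h \<odot> g) \<odot> f = h \<odot> (g \<odot> f)"
  by (rule SC4)
lemma idl': "scod C f = X \<Longrightarrow> I X \<odot> f = f" using SC3 by blast
lemma idr': "sdom C f = X \<Longrightarrow> f \<odot> I X = f" using SC3 by blast
lemma dom_zm: "sdom C (zm X Y) = X" using zm_hom[of X Y] unfolding hom_def by blast
lemma cod_zm: "scod C (zm X Y) = Y" using zm_hom[of X Y] unfolding hom_def by blast
lemma zml': "scod C f = X \<Longrightarrow> zm X Y \<odot> f = zm (sdom C f) Y" using zm_comp_l[of f "sdom C f" X Y] unfolding hom_def by blast
lemma zmr': "sdom C f = Y \<Longrightarrow> f \<odot> zm X Y = zm X (scod C f)" using zm_comp_r[of f Y "scod C f" X] unfolding hom_def by blast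
lemma star_comp': "sdom C g = scod C f \<Longrightarrow> st (g \<odot> f) = st f \<odot> st g" by (rule SC7)

lemmas cs = hom_def dom_comp cod_comp dom_star cod_star dom_id cod_id assoc' idl' idr' dom_zm cod_zm zml' zmr' star_comp'

lemma is_sum_uniq:
  assumes f: "hm f A B" and g: "hm g A B" and BP: "biproduct C B B P s1 r1 s2 r2"
    and u: "hm u A P" "r1 \<odot> u = f" "r2 \<odot> u = g"
    and v: "hm v P B" "v \<odot> s1 = I B" "v \<odot> s2 = I B"
    and S: "is_sum C f g h"
  shows "h = v \<odot> u"
proof -
  obtain A' B' P' s1' r1' s2' r2' u' v' where S':
     "hm f A' B'" "hm g A' B'" "biproduct C B' B' P' s1' r1' s2' r2'"
     "hm u' A' P'" "r1' \<odot> u' = f" "r2' \<odot> u' = g"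
     "hm v' P' B'" "v' \<odot> s1' = I B'" "v' \<odot> s2' = I B'" "h = v' \<odot> u'"
    using S unfolding is_sum_def by blast
  have AB: "A' = A" "B' = B" using f S'(1) hom_uniq by blast+
  note S' = S'[unfolded AB]
  note B1 = bp_s1[OF BP] bp_r1[OF BP] bp_s2[OF BP] bp_r2[OF BP] bp_11[OF BP] bp_22[OF BP] bp_12[OF BP] bp_21[OF BP]
  note B2 = bp_s1[OF S'(3)] bp_r1[OF S'(3)] bp_s2[OF S'(3)] bp_r2[OF S'(3)] bp_11[OF S'(3)] bp_22[OF S'(3)] bp_12[OF S'(3)] bp_21[OF S'(3)]
  obtain \<theta> where th: "hm \<theta> P P'" "r1' \<odot> \<theta> = r1" "r2' \<odot> \<theta> = r2"
    using prod_ex[OF S'(3) B1(2) B1(4)] by blast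
  have ts1: "\<theta> \<odot> s1 = s1'"
  proof (rule prod_uniq[OF S'(3)])
    show "hm (\<theta> \<odot> s1) B P'" using th B1 by (simp add: cs)
    show "hm s1' B P'" by (rule B2(1))
    have "r1' \<odot> (\<theta> \<odot> s1) = (r1' \<odot> \<theta>) \<odot> s1" using th(1) B1(1-4) B2(1-4) by (simp add: cs)
    thus "r1' \<odot> (\<theta> \<odot> s1) = r1' \<odot> s1'" using th B1 B2 by simp
    have "r2' \<odot> (\<theta> \<odot> s1) = (r2' \<odot> \<theta>) \<odot> s1" using th(1) B1(1-4) B2(1-4) by (simp add: cs)
    thus "r2' \<odot> (\<theta> \<odot> s1) = r2' \<odot> s1'" using th B1 B2 by simp
  qed
  have ts2: "\<theta> \<odot> s2 = s2'"
  proof (rule prod_uniq[OF S'(3)])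
    show "hm (\<theta> \<odot> s2) B P'" using th B1 by (simp add: cs)
    show "hm s2' B P'" by (rule B2(3))
    have "r1' \<odot> (\<theta> \<odot> s2) = (r1' \<odot> \<theta>) \<odot> s2" using th(1) B1(1-4) B2(1-4) by (simp add: cs)
    thus "r1' \<odot> (\<theta> \<odot> s2) = r1' \<odot> s2'" using th B1 B2 by simp
    have "r2' \<odot> (\<theta> \<odot> s2) = (r2' \<odot> \<theta>) \<odot> s2" using th(1) B1(1-4) B2(1-4) by (simp add: cs)
    thus "r2' \<odot> (\<theta> \<odot> s2) = r2' \<odot> s2'" using th B1 B2 by simp
  qed
  have tu: "\<theta> \<odot> u = u'"
  proof (rule prod_uniq[OF S'(3)])
    show "hm (\<theta> \<odot> u) A P'" using th u by (simp add: cs)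
    show "hm u' A P'" by (rule S'(4))
    have "r1' \<odot> (\<theta> \<odot> u) = (r1' \<odot> \<theta>) \<odot> u" using th(1) u(1) B2(1-4) by (simp add: cs)
    thus "r1' \<odot> (\<theta> \<odot> u) = r1' \<odot> u'" using th u S' by simp
    have "r2' \<odot> (\<theta> \<odot> u) = (r2' \<odot> \<theta>) \<odot> u" using th(1) u(1) B2(1-4) by (simp add: cs)
    thus "r2' \<odot> (\<theta> \<odot> u) = r2' \<odot> u'" using th u S' by simp
  qed
  have vt: "v' \<odot> \<theta> = v"
  proof (rule coprod_uniq[OF BP])
    show "hm (v' \<odot> \<theta>) P B" using th S' by (simp add: cs)
    show "hm v P B" by (rule v(1))
    have "(v' \<odot> \<theta>) \<odot> s1 = v' \<odot> (\<theta> \<odot> s1)" using th(1) S'(7) B1(1-4) by (simp add: cs)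
    thus "(v' \<odot> \<theta>) \<odot> s1 = v \<odot> s1" using ts1 S' v by simp
    have "(v' \<odot> \<theta>) \<odot> s2 = v' \<odot> (\<theta> \<odot> s2)" using th(1) S'(7) B1(1-4) by (simp add: cs)
    thus "(v' \<odot> \<theta>) \<odot> s2 = v \<odot> s2" using ts2 S' v by simp
  qed
  have "h = v' \<odot> (\<theta> \<odot> u)" using S' tu by simp
  also have "\<dots> = (v' \<odot> \<theta>) \<odot> u" using th S' u by (simp add: cs)
  finally show ?thesis using vt by simp
qed

lemma sum_eq:
  assumes f: "hm f A B" and g: "hm g A B" and BP: "biproduct C B B P s1 r1 s2 r2"
    and u: "hm u A P" "r1 \<odot> u = f" "r2 \<odot> u = g"
    and v: "hm v P B" "v \<odot> s1 = I B" "v \<odot> s2 = I B"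
  shows "f \<boxplus> g = v \<odot> u"
  unfolding madd_def
proof (rule the_equality)
  show "is_sum C f g (v \<odot> u)" unfolding is_sum_def using assms by blast
  show "\<And>h. is_sum C f g h \<Longrightarrow> h = v \<odot> u" using is_sum_uniq[OF assms] by blast
qed

lemma sum_setup:
  assumes f: "hm f A B" and g: "hm g A B"
  obtains P s1 r1 s2 r2 u v where "orthonormal_biproduct C B B P s1 r1 s2 r2"
    "hm u A P" "r1 \<odot> u = f" "r2 \<odot> u = g"
    "hm v P B" "v \<odot> s1 = I B" "v \<odot> s2 = I B" "f \<boxplus> g = v \<odot> u"
proof -
  obtain P s1 r1 s2 r2 where O: "orthonormal_biproduct C B B P s1 r1 s2 r2" using obp_ex by blast
  note BP = obp_bp[OF O]
  obtain u where u: "hm u A P" "r1 \<odot> u = f" "r2 \<odot> u = g" using prod_ex[OF BP f g] by blast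
  obtain v where v: "hm v P B" "v \<odot> s1 = I B" "v \<odot> s2 = I B" using coprod_ex[OF BP id_hom id_hom] by blast
  show ?thesis using that[OF O u v sum_eq[OF f g BP u v]] .
qed

lemma sum_hom[intro]: assumes "hm f A B" "hm g A B" shows "hm (f \<boxplus> g) A B"
proof -
  obtain P s1 r1 s2 r2 u v where "hm u A P" "hm v P B" "f \<boxplus> g = v \<odot> u"
    using sum_setup[OF assms] by metis
  thus ?thesis by (simp add: comp_hom)
qed

lemma ae: "a \<odot> b = c \<Longrightarrow> sdom C a = scod C b \<Longrightarrow> sdom C b = scod C x \<Longrightarrow> a \<odot> (b \<odot> x) = c \<odot> x"
  using assoc' by metis

lemma distr_r: assumes f: "hm f A B" and g: "hm g A B" and h: "hm h A' A"
  shows "(f \<boxplus> g) \<odot> h = f \<odot> h \<boxplus> g \<odot> h"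
proof -
  obtain P s1 r1 s2 r2 u v where O: "orthonormal_biproduct C B B P s1 r1 s2 r2"
    and u: "hm u A P" "r1 \<odot> u = f" "r2 \<odot> u = g"
    and v: "hm v P B" "v \<odot> s1 = I B" "v \<odot> s2 = I B" and e: "f \<boxplus> g = v \<odot> u"
    using sum_setup[OF f g] by blast
  note BP = obp_bp[OF O]
  note B1 = bp_s1[OF BP] bp_r1[OF BP] bp_s2[OF BP] bp_r2[OF BP]
  have "f \<odot> h \<boxplus> g \<odot> h = v \<odot> (u \<odot> h)"
  proof (rule sum_eq[of "f \<odot> h" A' B "g \<odot> h" P s1 r1 s2 r2 "u \<odot> h" v, OF _ _ BP _ _ _ v])
    show "hm (f \<odot> h) A' B" "hm (g \<odot> h) A' B" "hm (u \<odot> h) A' P" using f g h u by (auto simp: cs)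
    show "r1 \<odot> (u \<odot> h) = f \<odot> h" using u h B1 by (simp add: cs ae[OF u(2)])
    show "r2 \<odot> (u \<odot> h) = g \<odot> h" using u h B1 by (simp add: cs ae[OF u(3)])
  qed
  thus ?thesis using e u(1) v(1) h by (simp add: cs)
qed

lemma distr_l: assumes f: "hm f A B" and g: "hm g A B" and k: "hm k B D"
  shows "k \<odot> (f \<boxplus> g) = k \<odot> f \<boxplus> k \<odot> g"
proof -
  obtain P s1 r1 s2 r2 u v where O: "orthonormal_biproduct C B B P s1 r1 s2 r2"
    and u: "hm u A P" "r1 \<odot> u = f" "r2 \<odot> u = g"
    and v: "hm v P B" "v \<odot> s1 = I B" "v \<odot> s2 = I B" and e: "f \<boxplus> g = v \<odot> u"
    using sum_setup[OF f g] by blast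
  note BP = obp_bp[OF O]
  note B1 = bp_s1[OF BP] bp_r1[OF BP] bp_s2[OF BP] bp_r2[OF BP] bp_11[OF BP] bp_22[OF BP] bp_12[OF BP] bp_21[OF BP]
  obtain Q t1 q1 t2 q2 where OQ: "orthonormal_biproduct C D D Q t1 q1 t2 q2" using obp_ex by blast
  note BQ = obp_bp[OF OQ]
  note B2 = bp_s1[OF BQ] bp_r1[OF BQ] bp_s2[OF BQ] bp_r2[OF BQ] bp_11[OF BQ] bp_22[OF BQ] bp_12[OF BQ] bp_21[OF BQ]
  obtain wD where wD: "hm wD Q D" "wD \<odot> t1 = I D" "wD \<odot> t2 = I D"
    using coprod_ex[OF BQ id_hom id_hom] by blast
  have kr: "hm (k \<odot> r1) P D" "hm (k \<odot> r2) P D" using k B1 by (auto simp: cs)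
  obtain w where w: "hm w P Q" "q1 \<odot> w = k \<odot> r1" "q2 \<odot> w = k \<odot> r2"
    using prod_ex[OF BQ kr] by blast
  have ws1: "w \<odot> s1 = t1 \<odot> k"
  proof (rule prod_uniq[OF BQ])
    show "hm (w \<odot> s1) B Q" "hm (t1 \<odot> k) B Q" using w B1 B2 k by (auto simp: cs)
    show "q1 \<odot> (w \<odot> s1) = q1 \<odot> (t1 \<odot> k)" using w B1 B2 k
      by (simp add: cs ae[OF w(2)] ae[OF B2(5)] ae[OF B1(5)])
    show "q2 \<odot> (w \<odot> s1) = q2 \<odot> (t1 \<odot> k)" using w B1 B2 k
      by (simp add: cs ae[OF w(3)] ae[OF B2(8)] ae[OF B1(8)])
  qed
  have ws2: "w \<odot> s2 = t2 \<odot> k"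
  proof (rule prod_uniq[OF BQ])
    show "hm (w \<odot> s2) B Q" "hm (t2 \<odot> k) B Q" using w B1 B2 k by (auto simp: cs)
    show "q1 \<odot> (w \<odot> s2) = q1 \<odot> (t2 \<odot> k)" using w B1 B2 k
      by (simp add: cs ae[OF w(2)] ae[OF B2(7)] ae[OF B1(7)])
    show "q2 \<odot> (w \<odot> s2) = q2 \<odot> (t2 \<odot> k)" using w B1 B2 k
      by (simp add: cs ae[OF w(3)] ae[OF B2(6)] ae[OF B1(6)])
  qed
  have wDw: "wD \<odot> w = k \<odot> v"
  proof (rule coprod_uniq[OF BP])
    show "hm (wD \<odot> w) P D" "hm (k \<odot> v) P D" using w wD v k by (auto simp: cs)
    show "(wD \<odot> w) \<odot> s1 = (k \<odot> v) \<odot> s1" using w wD v k B1 B2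
      by (simp add: cs ws1 ae[OF wD(2)])
    show "(wD \<odot> w) \<odot> s2 = (k \<odot> v) \<odot> s2" using w wD v k B1 B2
      by (simp add: cs ws2 ae[OF wD(3)])
  qed
  have "k \<odot> f \<boxplus> k \<odot> g = wD \<odot> (w \<odot> u)"
  proof (rule sum_eq[OF _ _ BQ _ _ _ wD])
    show "hm (k \<odot> f) A D" "hm (k \<odot> g) A D" "hm (w \<odot> u) A Q" using f g k u w by (auto simp: cs)
    show "q1 \<odot> (w \<odot> u) = k \<odot> f" using u w B1 B2 k by (simp add: cs ae[OF w(2)] u(2)[symmetric])
    show "q2 \<odot> (w \<odot> u) = k \<odot> g" using u w B1 B2 k by (simp add: cs ae[OF w(3)] u(3)[symmetric])
  qed
  thus ?thesis using e u v w wD k by (simp add: cs ae[OF wDw])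
qed

lemma sum_comm: assumes f: "hm f A B" and g: "hm g A B" shows "f \<boxplus> g = g \<boxplus> f"
proof -
  obtain P s1 r1 s2 r2 u v where O: "orthonormal_biproduct C B B P s1 r1 s2 r2"
    and u: "hm u A P" "r1 \<odot> u = f" "r2 \<odot> u = g"
    and v: "hm v P B" "v \<odot> s1 = I B" "v \<odot> s2 = I B" and e: "f \<boxplus> g = v \<odot> u"
    using sum_setup[OF f g] by blast
  have "g \<boxplus> f = v \<odot> u" using sum_eq[OF g f bp_swap[OF obp_bp[OF O]] u(1) u(3) u(2) v(1) v(3) v(2)] .
  thus ?thesis using e by simp
qed

lemma sum_zero[simp]: assumes f: "hm f A B" shows "f \<boxplus> zm A B = f"
proof -
  obtain P s1 r1 s2 r2 where O: "orthonormal_biproduct C B B P s1 r1 s2 r2" using obp_ex by blast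
  note BP = obp_bp[OF O]
  note B1 = bp_s1[OF BP] bp_r1[OF BP] bp_s2[OF BP] bp_r2[OF BP] bp_11[OF BP] bp_22[OF BP] bp_12[OF BP] bp_21[OF BP]
  obtain v where v: "hm v P B" "v \<odot> s1 = I B" "v \<odot> s2 = I B"
    using coprod_ex[OF BP id_hom id_hom] by blast
  have "f \<boxplus> zm A B = v \<odot> (s1 \<odot> f)"
  proof (rule sum_eq[OF f zm_hom BP _ _ _ v])
    show "hm (s1 \<odot> f) A P" using f B1 by (auto simp: cs)
    show "r1 \<odot> (s1 \<odot> f) = f" using f B1 by (simp add: cs ae[OF B1(5)])
    show "r2 \<odot> (s1 \<odot> f) = zm A B" using f B1 by (simp add: cs ae[OF B1(8)])
  qed
  thus ?thesis using f v B1 by (simp add: cs ae[OF v(2)])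
qed

lemma zero_sum[simp]: assumes f: "hm f A B" shows "zm A B \<boxplus> f = f"
  using sum_comm[OF zm_hom f] sum_zero[OF f] by simp

lemma sum_assoc: assumes f: "hm f A B" and g: "hm g A B" and h: "hm h A B"
  shows "(f \<boxplus> g) \<boxplus> h = f \<boxplus> (g \<boxplus> h)"
proof -
  obtain P s1 r1 s2 r2 where O: "orthonormal_biproduct C B B P s1 r1 s2 r2" using obp_ex by blast
  note BP = obp_bp[OF O]
  note B1 = bp_s1[OF BP] bp_r1[OF BP] bp_s2[OF BP] bp_r2[OF BP]
  obtain v where v: "hm v P B" "v \<odot> s1 = I B" "v \<odot> s2 = I B"
    using coprod_ex[OF BP id_hom id_hom] by blast
  obtain X where X: "hm X A P" "r1 \<odot> X = f" "r2 \<odot> X = g" using prod_ex[OF BP f g] by blast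
  obtain Y where Y: "hm Y A P" "r1 \<odot> Y = zm A B" "r2 \<odot> Y = h" using prod_ex[OF BP zm_hom h] by blast
  have e1: "f \<boxplus> g = v \<odot> X" by (rule sum_eq[OF f g BP X v])
  have e2: "zm A B \<boxplus> h = v \<odot> Y" by (rule sum_eq[OF zm_hom h BP Y v])
  hence e2': "h = v \<odot> Y" using h by simp
  have XY: "hm (X \<boxplus> Y) A P" using X Y by blast
  have "f \<boxplus> (g \<boxplus> h) = v \<odot> (X \<boxplus> Y)"
  proof (rule sum_eq[OF f _ BP XY _ _ v])
    show "hm (g \<boxplus> h) A B" using g h by blast
    show "r1 \<odot> (X \<boxplus> Y) = f" using distr_l[OF X(1) Y(1) B1(2)] X Y f by simp
    show "r2 \<odot> (X \<boxplus> Y) = g \<boxplus> h" using distr_l[OF X(1) Y(1) B1(4)] X Y by simp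
  qed
  also have "\<dots> = (f \<boxplus> g) \<boxplus> h" using distr_l[OF X(1) Y(1) v(1)] e1 e2' by simp
  finally show ?thesis by simp
qed

lemma swap4: assumes "hm a A B" "hm b A B" "hm c A B" "hm d A B"
  shows "(a \<boxplus> b) \<boxplus> (c \<boxplus> d) = (a \<boxplus> c) \<boxplus> (b \<boxplus> d)"
proof -
  have "(a \<boxplus> b) \<boxplus> (c \<boxplus> d) = a \<boxplus> (b \<boxplus> (c \<boxplus> d))" using assms by (simp add: sum_assoc sum_hom)
  also have "b \<boxplus> (c \<boxplus> d) = c \<boxplus> (b \<boxplus> d)"
  proof -
    have "b \<boxplus> (c \<boxplus> d) = (b \<boxplus> c) \<boxplus> d" using sum_assoc[OF assms(2,3,4)] by simp
    also have "b \<boxplus> c = c \<boxplus> b" by (rule sum_comm[OF assms(2,3)])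
    also have "(c \<boxplus> b) \<boxplus> d = c \<boxplus> (b \<boxplus> d)" by (rule sum_assoc[OF assms(3,2,4)])
    finally show ?thesis .
  qed
  also have "a \<boxplus> (c \<boxplus> (b \<boxplus> d)) = (a \<boxplus> c) \<boxplus> (b \<boxplus> d)" using assms by (simp add: sum_assoc sum_hom)
  finally show ?thesis .
qed

lemma bp_id: assumes BP: "biproduct C X1 X2 P s1 r1 s2 r2"
  shows "s1 \<odot> r1 \<boxplus> s2 \<odot> r2 = I P"
proof -
  note B1 = bp_s1[OF BP] bp_r1[OF BP] bp_s2[OF BP] bp_r2[OF BP] bp_11[OF BP] bp_22[OF BP] bp_12[OF BP] bp_21[OF BP]
  have h1: "hm (s1 \<odot> r1) P P" "hm (s2 \<odot> r2) P P" using B1 by (auto simp: cs)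
  show ?thesis
  proof (rule prod_uniq[OF BP])
    show "hm (s1 \<odot> r1 \<boxplus> s2 \<odot> r2) P P" using h1 by blast
    show "hm (I P) P P" by simp
    have "r1 \<odot> (s1 \<odot> r1 \<boxplus> s2 \<odot> r2) = r1 \<odot> s1 \<odot> r1 \<boxplus> r1 \<odot> s2 \<odot> r2"
      by (rule distr_l[OF h1 B1(2)])
    also have "\<dots> = r1" using B1 by (simp add: cs ae[OF B1(5)] ae[OF B1(7)])
    finally show "r1 \<odot> (s1 \<odot> r1 \<boxplus> s2 \<odot> r2) = r1 \<odot> I P" using B1 by simp
    have "r2 \<odot> (s1 \<odot> r1 \<boxplus> s2 \<odot> r2) = r2 \<odot> s1 \<odot> r1 \<boxplus> r2 \<odot> s2 \<odot> r2"
      by (rule distr_l[OF h1 B1(4)])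
    also have "\<dots> = r2" using B1 by (simp add: cs ae[OF B1(6)] ae[OF B1(8)])
    finally show "r2 \<odot> (s1 \<odot> r1 \<boxplus> s2 \<odot> r2) = r2 \<odot> I P" using B1 by simp
  qed
qed

lemma pairing: assumes BP: "biproduct C X1 X2 P s1 r1 s2 r2"
  and a: "hm a A X1" and b: "hm b A X2" and h: "hm h A P" "r1 \<odot> h = a" "r2 \<odot> h = b"
  and p: "hm p X1 B" and q: "hm q X2 B" and k: "hm k P B" "k \<odot> s1 = p" "k \<odot> s2 = q"
  shows "k \<odot> h = p \<odot> a \<boxplus> q \<odot> b"
proof -
  note B1 = bp_s1[OF BP] bp_r1[OF BP] bp_s2[OF BP] bp_r2[OF BP]
  have h1: "hm (s1 \<odot> r1) P P" "hm (s2 \<odot> r2) P P" using B1 by (auto simp: cs)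
  have "h = (s1 \<odot> r1 \<boxplus> s2 \<odot> r2) \<odot> h" using bp_id[OF BP] h by simp
  also have "\<dots> = s1 \<odot> r1 \<odot> h \<boxplus> s2 \<odot> r2 \<odot> h" using distr_r[OF h1 h(1)] B1 h by (simp add: cs)
  also have "\<dots> = s1 \<odot> a \<boxplus> s2 \<odot> b" using h by simp
  finally have "k \<odot> h = k \<odot> (s1 \<odot> a \<boxplus> s2 \<odot> b)" by simp
  also have "\<dots> = k \<odot> s1 \<odot> a \<boxplus> k \<odot> s2 \<odot> b"
    using distr_l[of "s1 \<odot> a" A P "s2 \<odot> b" k B] a b B1 k by (simp add: cs)
  also have "\<dots> = p \<odot> a \<boxplus> q \<odot> b" using a b B1 k by (simp add: cs ae[OF k(2)] ae[OF k(3)])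
  finally show ?thesis .
qed

lemma star_sum: assumes f: "hm f A B" and g: "hm g A B" shows "st (f \<boxplus> g) = st f \<boxplus> st g"
proof -
  obtain P s1 r1 s2 r2 u v where O: "orthonormal_biproduct C B B P s1 r1 s2 r2"
    and u: "hm u A P" "r1 \<odot> u = f" "r2 \<odot> u = g"
    and v: "hm v P B" "v \<odot> s1 = I B" "v \<odot> s2 = I B" and e: "f \<boxplus> g = v \<odot> u"
    using sum_setup[OF f g] by blast
  note BP = obp_bp[OF O]
  note B1 = bp_s1[OF BP] bp_r1[OF BP] bp_s2[OF BP] bp_r2[OF BP]
  have rs: "r1 = st s1" "r2 = st s2" using obp_r1[OF O] obp_r2[OF O] by simp_all
  have rs': "st r1 = s1" "st r2 = s2" using rs by simp_all
  have "st (f \<boxplus> g) = st u \<odot> st v" using e u v by (simp add: cs)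
  also have "\<dots> = st f \<odot> I B \<boxplus> st g \<odot> I B"
  proof (rule pairing[OF BP id_hom id_hom])
    show "hm (st v) B P" "hm (st f) B A" "hm (st g) B A" "hm (st u) P A" using u v f g by auto
    have "st (v \<odot> s1) = st s1 \<odot> st v" using v B1 by (intro star_comp') (simp add: cs)
    thus "r1 \<odot> st v = I B" using v rs by simp
    have "st (v \<odot> s2) = st s2 \<odot> st v" using v B1 by (intro star_comp') (simp add: cs)
    thus "r2 \<odot> st v = I B" using v rs by simp
    have "st (r1 \<odot> u) = st u \<odot> st r1" using u B1 by (intro star_comp') (simp add: cs)
    thus "st u \<odot> s1 = st f" using u rs' by simp
    have "st (r2 \<odot> u) = st u \<odot> st r2" using u B1 by (intro star_comp') (simp add: cs)
    thus "st u \<odot> s2 = st g" using u rs' by simp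
  qed
  also have "\<dots> = st f \<boxplus> st g" using f g by (simp add: cs)
  finally show ?thesis .
qed

lemma R3: "\<exists>k. is_kernel C k f \<and> isometry C k"
proof -
  have "\<forall>f. \<exists>k. is_kernel C k f \<and> isometry C k" using PH unfolding pre_hilbert_def by (elim conjE)
  thus ?thesis by blast
qed
lemma R4: assumes "orthonormal_biproduct C X X P s1 r1 s2 r2" "hm d X P" "r1 \<odot> d = I X" "r2 \<odot> d = I X"
  shows "\<exists>g. is_kernel C d g"
proof -
  have "\<forall>X P s1 r1 s2 r2 d. orthonormal_biproduct C X X P s1 r1 s2 r2 \<and> hom C d X P \<and>
        scomp C r1 d = sid C X \<and> scomp C r2 d = sid C X \<longrightarrow> (\<exists>g. is_kernel C d g)"
    using PH unfolding pre_hilbert_def by (elim conjE)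
  thus ?thesis using assms by blast
qed
lemma ker_cod: "is_kernel C k f \<Longrightarrow> scod C k = sdom C f" unfolding is_kernel_def by (elim conjE)
lemma ker_zero: assumes "is_kernel C k f" shows "f \<odot> k = zm (sdom C k) (scod C f)"
proof -
  have "zero_mor C (f \<odot> k)" using assms unfolding is_kernel_def by (elim conjE)
  moreover have "hm (f \<odot> k) (sdom C k) (scod C f)" using ker_cod[OF assms] by (simp add: cs)
  ultimately show ?thesis using zero_mor_eq by blast
qed
lemma ker_fac: assumes "is_kernel C k f" "scod C t = sdom C f" "f \<odot> t = zm (sdom C t) (scod C f)"
  obtains h where "hm h (sdom C t) (sdom C k)" "k \<odot> h = t"
proof -
  have U: "\<forall>g. scod C g = sdom C f \<and> zero_mor C (scomp C f g) \<longrightarrow>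
        (\<exists>!h. hom C h (sdom C g) (sdom C k) \<and> scomp C k h = g)"
    using assms(1) unfolding is_kernel_def by (elim conjE)
  have "zero_mor C (f \<odot> t)" using assms(3) zm_is_zero by simp
  hence "\<exists>!h. hm h (sdom C t) (sdom C k) \<and> k \<odot> h = t" using U assms(2) by blast
  thus ?thesis using that by blast
qed

lemma id_inv: "\<exists>n. hm n X X \<and> I X \<boxplus> n = zm X X"
proof -
  obtain P s1 r1 s2 r2 where O: "orthonormal_biproduct C X X P s1 r1 s2 r2" using obp_ex by blast
  note BP = obp_bp[OF O]
  note B1 = bp_s1[OF BP] bp_r1[OF BP] bp_s2[OF BP] bp_r2[OF BP] bp_11[OF BP] bp_22[OF BP] bp_12[OF BP] bp_21[OF BP]
  have rs: "r1 = st s1" "r2 = st s2" using obp_r1[OF O] obp_r2[OF O] by simp_all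
  have rs': "st r1 = s1" "st r2 = s2" using rs by simp_all
  obtain D where D: "hm D X P" "r1 \<odot> D = I X" "r2 \<odot> D = I X" using prod_ex[OF BP id_hom id_hom] by blast
  obtain g where kD: "is_kernel C D g" using R4[OF O D] by blast
  define Yg where "Yg = scod C g"
  have hg: "hm g P Yg" using ker_cod[OF kD] D(1) unfolding Yg_def hom_def by simp
  have gD: "g \<odot> D = zm X Yg" using ker_zero[OF kD] D(1) unfolding Yg_def hom_def by simp
  define nab where "nab = st D"
  have hnab: "hm nab P X" unfolding nab_def using D(1) by blast
  obtain l where kl: "is_kernel C l nab" and il: "isometry C l" using R3 by blast
  define J where "J = sdom C l"
  have hl: "hm l J P" using ker_cod[OF kl] hnab unfolding J_def hom_def by simp
  have nl: "nab \<odot> l = zm J X" using ker_zero[OF kl] hnab hl unfolding hom_def by simp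
  have ll: "st l \<odot> l = I J" using il unfolding isometry_def J_def .
  have hsl: "hm (st l) P J" using hl by blast
  have "nab \<odot> st g = st (g \<odot> D)" unfolding nab_def using hg D(1) by (simp add: cs)
  hence ng: "nab \<odot> st g = zm Yg X" using gD by simp
  have k1: "scod C (st g) = sdom C nab" "nab \<odot> st g = zm (sdom C (st g)) (scod C nab)"
    using ng hg hnab by (simp_all add: cs)
  obtain h where hh: "hm h (sdom C (st g)) (sdom C l)" "l \<odot> h = st g"
    using ker_fac[OF kl k1] by blast
  have hh1: "hm h Yg J" using hh(1) hg unfolding J_def hom_def by (simp add: cs)
  have gfac: "g = st h \<odot> st l"
  proof -
    have "st (l \<odot> h) = st h \<odot> st l" using hh1 hl by (simp add: cs)
    thus ?thesis using hh(2) by simp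
  qed
  define c1 where "c1 = r1 \<odot> l"
  define c2 where "c2 = r2 \<odot> l"
  have hc: "hm c1 J X" "hm c2 J X" "hm (st c1) X J" "hm (st c2) X J"
    unfolding c1_def c2_def using hl B1 by (auto simp: cs)
  have nab_s: "nab \<odot> s1 = I X" "nab \<odot> s2 = I X"
  proof -
    have "st (r1 \<odot> D) = st D \<odot> st r1" using D(1) B1(2) by (simp add: cs)
    thus "nab \<odot> s1 = I X" using D rs' unfolding nab_def by simp
    have "st (r2 \<odot> D) = st D \<odot> st r2" using D(1) B1(4) by (simp add: cs)
    thus "nab \<odot> s2 = I X" using D rs' unfolding nab_def by simp
  qed
  have c12: "c1 \<boxplus> c2 = zm J X"
    using sum_eq[OF hc(1,2) BP hl c1_def[symmetric] c2_def[symmetric] hnab nab_s] nl by simp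
  have lc: "st l \<odot> s1 = st c1" "st l \<odot> s2 = st c2"
    unfolding c1_def c2_def using hl B1 rs' by (simp_all add: cs)
  have IJ: "st l \<odot> l = st c1 \<odot> c1 \<boxplus> st c2 \<odot> c2"
    by (rule pairing[OF BP hc(1,2) hl c1_def[symmetric] c2_def[symmetric] hc(3,4) hsl lc])
  have hcc: "hm (st c1 \<odot> c1) J J" "hm (st c2 \<odot> c2) J J" "hm (st c1 \<odot> c2) J J" "hm (st c2 \<odot> c1) J J"
    using hc by auto
  have z1: "st c1 \<odot> c1 \<boxplus> st c1 \<odot> c2 = zm J J"
    using distr_l[OF hc(1,2,3)] c12 hc by simp
  have z2: "st c2 \<odot> c2 \<boxplus> st c2 \<odot> c1 = zm J J"
    using distr_l[OF hc(1,2,4)] c12 hc sum_comm[OF hcc(4,2)] by simp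
  define NJ where "NJ = st c1 \<odot> c2 \<boxplus> st c2 \<odot> c1"
  have hNJ: "hm NJ J J" unfolding NJ_def using hcc by blast
  have IN: "I J \<boxplus> NJ = zm J J"
    using swap4[OF hcc] z1 z2 IJ ll unfolding NJ_def by simp
  define m where "m = NJ \<odot> st c1"
  have hm: "hm m X J" unfolding m_def using hNJ hc by blast
  have mc: "m \<boxplus> st c1 = zm X J"
  proof -
    have "(NJ \<boxplus> I J) \<odot> st c1 = m \<boxplus> I J \<odot> st c1" unfolding m_def by (rule distr_r[OF hNJ id_hom hc(3)])
    moreover have "NJ \<boxplus> I J = zm J J" using IN sum_comm[OF hNJ id_hom] by simp
    ultimately show ?thesis using hc by simp
  qed
  define t where "t = s1 \<boxplus> l \<odot> m"
  have hlm: "hm (l \<odot> m) X P" using hl hm by blast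
  have ht: "hm t X P" unfolding t_def using B1 hlm by blast
  have lt: "st l \<odot> t = zm X J"
  proof -
    have "st l \<odot> t = st l \<odot> s1 \<boxplus> st l \<odot> (l \<odot> m)" unfolding t_def by (rule distr_l[OF B1(1) hlm hsl])
    also have "st l \<odot> (l \<odot> m) = m" using ae[OF ll, of m] hl hm by (simp add: cs)
    finally show ?thesis using lc mc sum_comm[OF hm hc(3)] by simp
  qed
  have gt: "g \<odot> t = zm X Yg"
  proof -
    have "g \<odot> t = st h \<odot> (st l \<odot> t)" unfolding gfac using hh1 hl ht by (simp add: cs)
    thus ?thesis using lt hh1 by (simp add: cs)
  qed
  have k2: "scod C t = sdom C g" "g \<odot> t = zm (sdom C t) (scod C g)"
    using ht hg gt by (simp_all add: cs)
  obtain u where hu: "hm u (sdom C t) (sdom C D)" "D \<odot> u = t"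
    using ker_fac[OF kD k2] by blast
  have hu1: "hm u X X" using hu(1) ht D(1) unfolding hom_def by simp
  have r1t: "r1 \<odot> t = I X \<boxplus> c1 \<odot> m"
  proof -
    have "r1 \<odot> t = r1 \<odot> s1 \<boxplus> r1 \<odot> (l \<odot> m)" unfolding t_def by (rule distr_l[OF B1(1) hlm B1(2)])
    thus ?thesis unfolding c1_def using B1 hl hm by (simp add: cs)
  qed
  have r2t: "r2 \<odot> t = c2 \<odot> m"
  proof -
    have "r2 \<odot> t = r2 \<odot> s1 \<boxplus> r2 \<odot> (l \<odot> m)" unfolding t_def by (rule distr_l[OF B1(1) hlm B1(4)])
    thus ?thesis unfolding c2_def using B1 hl hm by (simp add: cs)
  qed
  have "r1 \<odot> t = u" "r2 \<odot> t = u" using hu(2)[symmetric] D hu1 B1(2,4) by (simp_all add: cs ae[OF D(2)] ae[OF D(3)])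
  hence E1: "I X \<boxplus> c1 \<odot> m = c2 \<odot> m" using r1t r2t by simp
  have hcm: "hm (c1 \<odot> m) X X" "hm (c2 \<odot> m) X X" "hm (c1 \<odot> st c1) X X" "hm (c2 \<odot> st c1) X X"
    using hc hm by auto
  have E2: "c1 \<odot> m \<boxplus> c1 \<odot> st c1 = zm X X"
    using distr_l[OF hm hc(3) hc(1)] mc hc by simp
  have E2': "c2 \<odot> m \<boxplus> c2 \<odot> st c1 = zm X X"
    using distr_l[OF hm hc(3) hc(2)] mc hc by simp
  have E3: "c2 \<odot> m \<boxplus> c1 \<odot> st c1 = I X"
    using E1[symmetric] sum_assoc[OF id_hom hcm(1,3)] E2 by simp
  define n where "n = c2 \<odot> st c1 \<boxplus> c1 \<odot> m"
  have "I X \<boxplus> n = (c2 \<odot> m \<boxplus> c1 \<odot> st c1) \<boxplus> (c2 \<odot> st c1 \<boxplus> c1 \<odot> m)"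
    unfolding n_def using E3 by simp
  also have "\<dots> = (c2 \<odot> m \<boxplus> c2 \<odot> st c1) \<boxplus> (c1 \<odot> st c1 \<boxplus> c1 \<odot> m)"
    by (rule swap4[OF hcm(2,3,4,1)])
  also have "\<dots> = zm X X" using E2' E2 sum_comm[OF hcm(1,3)] by simp
  finally have "I X \<boxplus> n = zm X X" .
  moreover have "hm n X X" unfolding n_def using hcm by blast
  ultimately show ?thesis by blast
qed

lemma ng_ex: assumes f: "hm f A B" shows "\<exists>g. hm g A B \<and> f \<boxplus> g = zm A B"
proof -
  obtain n where n: "hm n A A" "I A \<boxplus> n = zm A A" using id_inv by blast
  have "f \<odot> (I A \<boxplus> n) = f \<odot> I A \<boxplus> f \<odot> n" by (rule distr_l[OF id_hom n(1) f])
  hence "f \<boxplus> f \<odot> n = zm A B" using n f by simp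
  moreover have "hm (f \<odot> n) A B" using f n by blast
  ultimately show ?thesis by blast
qed

definition ng where "ng f = (SOME g. hm g (sdom C f) (scod C f) \<and> f \<boxplus> g = zm (sdom C f) (scod C f))"

lemma ng: assumes f: "hm f A B" shows "hm (ng f) A B" "f \<boxplus> ng f = zm A B"
proof -
  have AB: "A = sdom C f" "B = scod C f" using f unfolding hom_def by simp_all
  have "hm (ng f) (sdom C f) (scod C f) \<and> f \<boxplus> ng f = zm (sdom C f) (scod C f)"
    unfolding ng_def by (rule someI_ex) (use ng_ex[OF f] AB in simp)
  thus "hm (ng f) A B" "f \<boxplus> ng f = zm A B" using AB by simp_all
qed

lemma ng_uniq: assumes f: "hm f A B" and g: "hm g A B" and e: "f \<boxplus> g = zm A B" shows "ng f = g"
proof -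
  note n = ng[OF f]
  have "g = g \<boxplus> (f \<boxplus> ng f)" using n g by simp
  also have "\<dots> = (g \<boxplus> f) \<boxplus> ng f" using sum_assoc[OF g f n(1)] by simp
  also have "g \<boxplus> f = zm A B" using sum_comm[OF g f] e by simp
  finally show ?thesis using n by simp
qed

lemma ng_comp_l: assumes f: "hm f A B" and k: "hm k B D" shows "ng (k \<odot> f) = k \<odot> ng f"
proof (rule ng_uniq)
  show "hm (k \<odot> f) A D" "hm (k \<odot> ng f) A D" using f k ng[OF f] by auto
  show "k \<odot> f \<boxplus> k \<odot> ng f = zm A D" using distr_l[OF f ng(1)[OF f] k] ng[OF f] k by simp
qed

lemma ng_comp_r: assumes f: "hm f A B" and h: "hm h A' A" shows "ng (f \<odot> h) = ng f \<odot> h"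
proof (rule ng_uniq)
  show "hm (f \<odot> h) A' B" "hm (ng f \<odot> h) A' B" using f h ng[OF f] by auto
  show "f \<odot> h \<boxplus> ng f \<odot> h = zm A' B" using distr_r[OF f ng(1)[OF f] h] ng[OF f] h by simp
qed

lemma ng_star: assumes f: "hm f A B" shows "st (ng f) = ng (st f)"
proof (rule ng_uniq[symmetric])
  show "hm (st f) B A" "hm (st (ng f)) B A" using f ng[OF f] by auto
  show "st f \<boxplus> st (ng f) = zm B A" using star_sum[OF f ng(1)[OF f]] ng[OF f] by simp
qed

lemma ng_ng: assumes f: "hm f A B" shows "ng (ng f) = f"
  using ng_uniq[OF ng(1)[OF f] f] sum_comm[OF f ng(1)[OF f]] ng(2)[OF f] by simp

lemma herm_sq: "hm h A B \<Longrightarrow> hermitian C (st h \<odot> h)"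
  unfolding hermitian_def by (simp add: cs)
lemma herm_id: "hermitian C (I X)"
  unfolding hermitian_def by (simp add: cs)

lemma contr_get: assumes "contractive C f" "hm f X Y"
  obtains y where "sdom C y = X" "I X = st f \<odot> f \<boxplus> st y \<odot> y"
proof -
  have "\<exists>y. sdom C y = sdom C (st f \<odot> f) \<and> I (sdom C f) = st f \<odot> f \<boxplus> st y \<odot> y"
    using assms(1) unfolding contractive_def mle_def by (elim conjE)
  moreover have "sdom C (st f \<odot> f) = X" "sdom C f = X" using assms(2) by (simp_all add: cs)
  ultimately show ?thesis using that by auto
qed

lemma contr_mk: assumes "hm f X Y" "sdom C y = X" "I X = st f \<odot> f \<boxplus> st y \<odot> y"
  shows "contractive C f"
proof -
  have d: "sdom C (st f \<odot> f) = X" "sdom C f = X" using assms(1) by (simp_all add: cs)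
  have c3: "sdom C (st f \<odot> f) = sdom C (I X)" using d(1) dom_id by simp
  have c4: "sdom C y = sdom C (st f \<odot> f)" using d assms(2) by simp
  show ?thesis unfolding contractive_def mle_def d(2)
    by (intro conjI herm_sq[OF assms(1)] herm_id exI[of _ y] c3 c4 assms(3))
qed

lemma part1: assumes "isometry C f" shows "contractive C f"
proof -
  define X where "X = sdom C f"
  have f: "hm f X (scod C f)" unfolding X_def hom_def by simp
  have e: "st f \<odot> f = I X" using assms unfolding isometry_def X_def .
  have H: "I X = st f \<odot> f \<boxplus> st (zm X X) \<odot> zm X X" using e by (simp add: cs)
  show ?thesis by (rule contr_mk[OF f dom_zm H])
qed


lemma part2: assumes fg: "sdom C g = scod C f" and cf: "contractive C f" and cg: "contractive C g"
  shows "contractive C (g \<odot> f)"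
proof -
  define X where "X = sdom C f"
  define Y where "Y = scod C f"
  define Z where "Z = scod C g"
  have f: "hm f X Y" and g: "hm g Y Z" unfolding X_def Y_def Z_def hom_def using fg by simp_all
  obtain y where y: "sdom C y = X" "I X = st f \<odot> f \<boxplus> st y \<odot> y" using contr_get[OF cf f] by blast
  obtain w where w: "sdom C w = Y" "I Y = st g \<odot> g \<boxplus> st w \<odot> w" using contr_get[OF cg g] by blast
  define W where "W = scod C y"
  define V where "V = scod C w"
  have hy: "hm y X W" and hw: "hm w Y V" unfolding W_def V_def hom_def using y w by simp_all
  have hwf: "hm (w \<odot> f) X V" using hw f by blast
  define G where "G = st (g \<odot> f) \<odot> (g \<odot> f)"
  define W' where "W' = st (w \<odot> f) \<odot> (w \<odot> f)"
  have hG: "hm G X X" and hW': "hm W' X X" and hY': "hm (st y \<odot> y) X X"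
    unfolding G_def W'_def using f g hw hy by auto
  have "st f \<odot> f = st f \<odot> (I Y \<odot> f)" using f by simp
  also have "\<dots> = st f \<odot> ((st g \<odot> g \<boxplus> st w \<odot> w) \<odot> f)" using w(2) by simp
  also have "\<dots> = st f \<odot> (st g \<odot> g \<odot> f \<boxplus> st w \<odot> w \<odot> f)"
    using distr_r[of "st g \<odot> g" Y Y "st w \<odot> w" f X] g hw f by (simp add: cs)
  also have "\<dots> = G \<boxplus> W'"
    using distr_l[of "st g \<odot> g \<odot> f" X Y "st w \<odot> w \<odot> f" "st f" X] g hw f
    unfolding G_def W'_def by (simp add: cs)
  finally have "I X = (G \<boxplus> W') \<boxplus> st y \<odot> y" using y(2) by simp
  hence e1: "I X = G \<boxplus> (W' \<boxplus> st y \<odot> y)" using sum_assoc[OF hG hW' hY'] by simp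
  obtain Q s1 r1 s2 r2 where O: "orthonormal_biproduct C V W Q s1 r1 s2 r2" using obp_ex by blast
  note BP = obp_bp[OF O]
  note B1 = bp_s1[OF BP] bp_r1[OF BP] bp_s2[OF BP] bp_r2[OF BP]
  have rs': "st r1 = s1" "st r2 = s2" using obp_r1[OF O] obp_r2[OF O] by simp_all
  obtain u where u: "hm u X Q" "r1 \<odot> u = w \<odot> f" "r2 \<odot> u = y" using prod_ex[OF BP hwf hy] by blast
  have "st u \<odot> u = st (w \<odot> f) \<odot> (w \<odot> f) \<boxplus> st y \<odot> y"
  proof (rule pairing[OF BP hwf hy u])
    show "hm (st (w \<odot> f)) V X" "hm (st y) W X" "hm (st u) Q X" using hwf hy u by auto
    have "st (r1 \<odot> u) = st u \<odot> st r1" using u(1) B1 by (simp add: cs)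
    thus "st u \<odot> s1 = st (w \<odot> f)" using u rs' by simp
    have "st (r2 \<odot> u) = st u \<odot> st r2" using u(1) B1 by (simp add: cs)
    thus "st u \<odot> s2 = st y" using u rs' by simp
  qed
  hence "I X = G \<boxplus> st u \<odot> u" using e1 unfolding W'_def by simp
  moreover have "hm (g \<odot> f) X Z" using f g by blast
  moreover have "sdom C u = X" using u unfolding hom_def by simp
  ultimately show ?thesis using contr_mk unfolding G_def by blast
qed

lemma part3: assumes cf: "contractive C f" shows "contractive C (st f)"
proof -
  define X where "X = sdom C f"
  define Y where "Y = scod C f"
  have f: "hm f X Y" unfolding X_def Y_def hom_def by simp
  obtain y where y: "sdom C y = X" "I X = st f \<odot> f \<boxplus> st y \<odot> y" using contr_get[OF cf f] by blast
  define W where "W = scod C y"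
  have hy: "hm y X W" unfolding W_def hom_def using y by simp
  obtain P s1 r1 s2 r2 where O: "orthonormal_biproduct C Y W P s1 r1 s2 r2" using obp_ex by blast
  note BP = obp_bp[OF O]
  note B1 = bp_s1[OF BP] bp_r1[OF BP] bp_s2[OF BP] bp_r2[OF BP] bp_11[OF BP]
  have rs: "st s1 = r1" "st s2 = r2" using obp_r1[OF O] obp_r2[OF O] by simp_all
  have rs': "st r1 = s1" "st r2 = s2" using obp_r1[OF O] obp_r2[OF O] by simp_all
  obtain m where m: "hm m X P" "r1 \<odot> m = f" "r2 \<odot> m = y" using prod_ex[OF BP f hy] by blast
  have hsm: "hm (st m) P X" using m by blast
  have ms1: "st m \<odot> s1 = st f"
  proof -
    have "st (r1 \<odot> m) = st m \<odot> st r1" using m(1) B1 by (simp add: cs)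
    thus ?thesis using m rs' by simp
  qed
  have ms2: "st m \<odot> s2 = st y"
  proof -
    have "st (r2 \<odot> m) = st m \<odot> st r2" using m(1) B1 by (simp add: cs)
    thus ?thesis using m rs' by simp
  qed
  have mm: "st m \<odot> m = I X"
    using pairing[OF BP f hy m _ _ hsm ms1 ms2] f hy y(2) by auto
  define F where "F = f \<odot> st f"
  have hF: "hm F Y Y" unfolding F_def using f by blast
  have hmf: "hm (m \<odot> st f) Y P" using m f by blast
  define w where "w = ng (m \<odot> st f)"
  have hw: "hm w Y P" unfolding w_def using ng(1)[OF hmf] .
  have sw: "st w = ng (f \<odot> st m)" unfolding w_def using ng_star[OF hmf] m f by (simp add: cs)
  have hfm: "hm (f \<odot> st m) P Y" using m f by blast
  have hsw: "hm (st w) P Y" using hw by blast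
  define z where "z = s1 \<boxplus> w"
  have hz: "hm z Y P" unfolding z_def using B1 hw by blast
  have sz: "st z = r1 \<boxplus> st w" unfolding z_def using star_sum[OF B1(1) hw] rs by simp
  have "st z \<odot> z = r1 \<odot> z \<boxplus> st w \<odot> z" unfolding sz by (rule distr_r[OF B1(2) hsw hz])
  also have "r1 \<odot> z = r1 \<odot> s1 \<boxplus> r1 \<odot> w" unfolding z_def by (rule distr_l[OF B1(1) hw B1(2)])
  also have "st w \<odot> z = st w \<odot> s1 \<boxplus> st w \<odot> w" unfolding z_def by (rule distr_l[OF B1(1) hw hsw])
  also have "r1 \<odot> w = ng F"
  proof -
    have "r1 \<odot> w = ng (r1 \<odot> (m \<odot> st f))" unfolding w_def using ng_comp_l[OF hmf B1(2)] by simp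
    also have "r1 \<odot> (m \<odot> st f) = F" unfolding F_def using m f B1 by (simp add: cs ae[OF m(2)])
    finally show ?thesis .
  qed
  also have "st w \<odot> s1 = ng F"
  proof -
    have "st w \<odot> s1 = ng ((f \<odot> st m) \<odot> s1)" unfolding sw using ng_comp_r[OF hfm B1(1)] by simp
    also have "(f \<odot> st m) \<odot> s1 = F" unfolding F_def using m f B1 by (simp add: cs ms1)
    finally show ?thesis .
  qed
  also have "st w \<odot> w = F"
  proof -
    have "st w \<odot> w = ng (st w \<odot> (m \<odot> st f))" using ng_comp_l[OF hmf hsw, folded w_def] by simp
    also have "st w \<odot> (m \<odot> st f) = (st w \<odot> m) \<odot> st f" using hsw m f by (simp add: cs)
    also have "st w \<odot> m = ng ((f \<odot> st m) \<odot> m)" unfolding sw using ng_comp_r[OF hfm m(1)] by simp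
    also have "(f \<odot> st m) \<odot> m = f" using m f by (simp add: cs mm)
    also have "ng f \<odot> st f = ng F" unfolding F_def using ng_comp_r[OF f star_hom[OF f]] by simp
    also have "ng (ng F) = F" by (rule ng_ng[OF hF])
    finally show ?thesis .
  qed
  finally have "st z \<odot> z = (r1 \<odot> s1 \<boxplus> ng F) \<boxplus> (ng F \<boxplus> F)" .
  also have "ng F \<boxplus> F = zm Y Y" using ng[OF hF] sum_comm[OF hF ng(1)[OF hF]] by simp
  finally have zz: "st z \<odot> z = I Y \<boxplus> ng F" using B1(5) sum_zero[OF sum_hom[OF id_hom ng(1)[OF hF]]] by simp
  have "F \<boxplus> st z \<odot> z = F \<boxplus> (ng F \<boxplus> I Y)" using zz sum_comm[OF id_hom ng(1)[OF hF]] by simp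
  also have "\<dots> = (F \<boxplus> ng F) \<boxplus> I Y" using sum_assoc[OF hF ng(1)[OF hF] id_hom] by simp
  also have "\<dots> = I Y" using ng[OF hF] by simp
  finally have e: "I Y = st (st f) \<odot> st f \<boxplus> st z \<odot> z" unfolding F_def by simp
  have "sdom C z = Y" using hz unfolding hom_def by simp
  thus ?thesis using contr_mk[OF star_hom[OF f] _ e] by blast
qed

end

theorem proposition7p3:
  fixes C :: "('o, 'm) scat"
  assumes "pre_hilbert C"
  shows "(\<forall>f. isometry C f \<longrightarrow> contractive C f)
    \<and> (\<forall>f g. sdom C g = scod C f \<and> contractive C f \<and> contractive C g
             \<longrightarrow> contractive C (scomp C g f))
    \<and> (\<forall>f. contractive C f \<longrightarrow> contractive C (sstar C f))"
proof -
  interpret ph C by (rule ph.intro[OF assms])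
  show ?thesis using part1 part2 part3 by blast
qed

end
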